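(* Let $X\subset\mathbb{R}^n$ be bounded, let $X_I, X_G\subset X$ with $X_G$ compact, and let $\partial X_G$ denote the boundary of $X_G$. Let $f\colon X\to\mathbb{R}^n$ define the dynamics $x(k+1)=f(x(k))$ (assumed to have unique solutions). Fix $T\in\mathbb{N}_+$ and let $\Xi$ be the set of all trajectories $\xi=\{x(k)\}_{k=0}^T$ consistent with these dynamics and with $x(0)\in X_I$. Let $V\colon\mathbb{R}^n\to\mathbb{R}$ be continuous and fix $\delta$ with $\delta>-\inf_{x\in X_I}V(x)\geq 0$. Suppose that (i) $V(x)\le 0$ for all $x\in X_I$; (ii) $V(x)\ge-\delta$ for all $x\in\partial X_G$; (iii) $V(x)>-\delta$ for all $x\in X\setminus X_G$; (iv) $V(x)>0$ for all $x\in\mathbb{R}^n\setminus X$; (v) for every trajectory $\xi=\{x(k)\}_{k=0}^T\in\Xi$, $$V(x(k+1))-V(x(k))<-\frac1T\Big(\sup_{x\in X_I}V(x)+\delta\Big),\qquad k=0,\dots,k_G-1,$$ where $k_G:=\min\{k\in\{0,\dots,T\}: V(x(k))\le-\delta\}$, or $k_G=T$ if no such $k$ exists. Then $V$ is a reachability certificate: for every $\xi\in\Xi$ there exists $k\in\{0,\dots,T\}$ with $x(k)\in X_G$.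
   Context: Trajectories are finite sequences of states generated by the deterministic discrete-time dynamics from an initial state in $X_I$. *)

theory Defs
  imports "HOL-Analysis.Analysis"
begin

text \<open>Trajectories of horizon T of x(k+1) = f(x(k)) with x(0) in X_I.
  Since f is only defined on X, each state at which f is applied (k < T)
  must lie in X.\<close>
definition trajectories ::
  "'a set \<Rightarrow> 'a set \<Rightarrow> ('a \<Rightarrow> 'a) \<Rightarrow> nat \<Rightarrow> (nat \<Rightarrow> 'a) set" where
  "trajectories X X_I f T =
     {\<xi>. \<xi> 0 \<in> X_I \<and> (\<forall>k<T. \<xi> k \<in> X \<and> \<xi> (Suc k) = f (\<xi> k))}"

definition kG :: "('a \<Rightarrow> real) \<Rightarrow> real \<Rightarrow> nat \<Rightarrow> (nat \<Rightarrow> 'a) \<Rightarrow> nat" where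
  "kG V \<delta> T \<xi> =
     (if \<exists>k\<le>T. V (\<xi> k) \<le> - \<delta> then (LEAST k. k \<le> T \<and> V (\<xi> k) \<le> - \<delta>) else T)"

end

theory Submission
  imports Defs
begin

theorem proposition1:
  fixes X X_I X_G :: "(real ^ 'n) set"
    and f :: "real ^ 'n \<Rightarrow> real ^ 'n"
    and V :: "real ^ 'n \<Rightarrow> real"
    and T :: nat and \<delta> :: real
  assumes "bounded X"
    and "X_I \<subseteq> X" and "X_G \<subseteq> X" and "compact X_G"
    and "T \<ge> 1"
    and "continuous_on UNIV V"
    and "- Inf (V ` X_I) \<ge> 0" and "\<delta> > - Inf (V ` X_I)"
    and "\<forall>x\<in>X_I. V x \<le> 0"
    and "\<forall>x\<in>frontier X_G. V x \<ge> - \<delta>"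
    and "\<forall>x\<in>X - X_G. V x > - \<delta>"
    and "\<forall>x\<in>UNIV - X. V x > 0"
    and "\<forall>\<xi>\<in>trajectories X X_I f T. \<forall>k<kG V \<delta> T \<xi>.
           V (\<xi> (Suc k)) - V (\<xi> k) < - (1 / real T) * (Sup (V ` X_I) + \<delta>)"
  shows "\<forall>\<xi>\<in>trajectories X X_I f T. \<exists>k\<le>T. \<xi> k \<in> X_G"
proof
  fix \<xi> assume xi: "\<xi> \<in> trajectories X X_I f T"
  show "\<exists>k\<le>T. \<xi> k \<in> X_G"
  proof (rule ccontr)
    assume nG: "\<not> (\<exists>k\<le>T. \<xi> k \<in> X_G)"
    have dpos: "\<delta> > 0" using assms(7,8) by linarith
    have noV: "\<not> (V (\<xi> k) \<le> - \<delta>)" if "k \<le> T" for k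
    proof
      assume h: "V (\<xi> k) \<le> - \<delta>"
      have "\<xi> k \<notin> X_G" using nG that by blast
      show False
      proof (cases "\<xi> k \<in> X")
        case True thus False using assms(11) h \<open>\<xi> k \<notin> X_G\<close> by force
      next
        case False thus False using assms(12) h dpos by force
      qed
    qed
    hence kGT: "kG V \<delta> T \<xi> = T" unfolding kG_def by auto
    define c where "c = (1 / real T) * (Sup (V ` X_I) + \<delta>)"
    have step: "\<And>k. k < T \<Longrightarrow> V (\<xi> (Suc k)) - V (\<xi> k) < - c"
      using assms(13) xi kGT c_def by auto
    have ind: "m \<le> T \<Longrightarrow> V (\<xi> m) \<le> V (\<xi> 0) - real m * c" for m
    proof (induction m)
      case 0 then show ?case by simp
    next
      case (Suc m)
      then have "V (\<xi> (Suc m)) - V (\<xi> m) < - c" using step by simp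
      with Suc show ?case by (simp add: algebra_simps)
    qed
    have x0: "\<xi> 0 \<in> X_I" using xi unfolding trajectories_def by simp
    have bdd: "bdd_above (V ` X_I)" using assms(9) by (auto intro: bdd_aboveI[where M=0])
    have "V (\<xi> 0) \<le> Sup (V ` X_I)" using x0 bdd by (simp add: cSUP_upper)
    moreover have "real T * c = Sup (V ` X_I) + \<delta>" using assms(5) c_def by simp
    ultimately have "V (\<xi> T) \<le> - \<delta>" using ind[of T] by linarith
    thus False using noV by simp
  qed
qed

end
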